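(* For $d\ge3$ and each $s\in\{0,1,2\}$, the maximal number of pairwise disjoint lines in the family $\mathcal{L}^s$ is $\mathfrak{s}(\mathcal{L}^s)=d$. In particular, the maximal number $\mathfrak{s}({\rm F}_d)$ of pairwise disjoint lines on ${\rm F}_d$ satisfies $\mathfrak{s}({\rm F}_d)\le 3d$.
   Context: ${\rm F}_d\subset\mathbb{P}^3(\mathbb{C})$ is the surface $x^d-y^d-z^d+w^d=0$. Fix a primitive $d$-th root of unity $\eta$ and $v\in\mathbb{C}$ with $v^d=-1$. For $k,i\in\{0,\dots,d-1\}$ define $L^0_{k,i}:\{y=\eta^i x,\ w=\eta^k z\}$, $L^1_{k,i}:\{x=\eta^{k+i}z,\ y=\eta^i w\}$, $L^2_{k,i}:\{x=v\eta^i w,\ y=v\eta^{k+i}z\}$, and $\mathcal{L}^s=\{L^s_{k,i}\}_{k,i}$. The lines on ${\rm F}_d$ are exactly the elements of $\mathcal{L}^0\cup\mathcal{L}^1\cup\mathcal{L}^2$. For a set $X$ of lines (or a surface), $\mathfrak{s}(X)$ denotes the maximal number of pairwise disjoint lines in $X$. *)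

theory Defs
  imports "HOL-Analysis.Analysis" "HOL-Library.Extended_Nat"
begin

text \<open>Points of P^3(C) are represented by nonzero vectors (x,y,z,w) in C^4,
  coordinates p$1 = x, p$2 = y, p$3 = z, p$4 = w.  A subset of P^3 is represented
  by the (scaling-closed) set of nonzero vectors representing its points.\<close>

type_synonym pt = "complex ^ 4"

definition Fermat :: "nat \<Rightarrow> pt set" where
  "Fermat d = {p. p \<noteq> 0 \<and> (p$1)^d - (p$2)^d - (p$3)^d + (p$4)^d = 0}"

definition is_line :: "pt set \<Rightarrow> bool" where
  "is_line L \<longleftrightarrow> (\<exists>a b. (\<forall>s t. s *s a + t *s b = 0 \<longrightarrow> s = 0 \<and> t = 0) \<and>
       L = {s *s a + t *s b | s t. s *s a + t *s b \<noteq> 0})"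

definition lines_on :: "pt set \<Rightarrow> pt set set" where
  "lines_on S = {L. is_line L \<and> L \<subseteq> S}"

definition L0 :: "complex \<Rightarrow> nat \<Rightarrow> nat \<Rightarrow> pt set" where
  "L0 \<eta> k i = {p. p \<noteq> 0 \<and> p$2 = \<eta>^i * p$1 \<and> p$4 = \<eta>^k * p$3}"

definition L1 :: "complex \<Rightarrow> nat \<Rightarrow> nat \<Rightarrow> pt set" where
  "L1 \<eta> k i = {p. p \<noteq> 0 \<and> p$1 = \<eta>^(k+i) * p$3 \<and> p$2 = \<eta>^i * p$4}"

definition L2 :: "complex \<Rightarrow> complex \<Rightarrow> nat \<Rightarrow> nat \<Rightarrow> pt set" where
  "L2 \<eta> v k i = {p. p \<noteq> 0 \<and> p$1 = v * \<eta>^i * p$4 \<and> p$2 = v * \<eta>^(k+i) * p$3}"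

definition Lfam :: "nat \<Rightarrow> complex \<Rightarrow> complex \<Rightarrow> nat \<Rightarrow> pt set set" where
  "Lfam d \<eta> v s =
     (if s = 0 then {L0 \<eta> k i | k i. k < d \<and> i < d}
      else if s = 1 then {L1 \<eta> k i | k i. k < d \<and> i < d}
      else {L2 \<eta> v k i | k i. k < d \<and> i < d})"

definition ecard :: "'a set \<Rightarrow> enat" where
  "ecard A = (if finite A then enat (card A) else \<infinity>)"

definition sfrak :: "'a set set \<Rightarrow> enat" where
  "sfrak X = Sup {ecard A | A. A \<subseteq> X \<and> pairwise disjnt A}"

end

theory Submission
  imports Defs
begin


lemma coeffs_W:
  fixes c1 c2 c3 c4 \<alpha> \<beta> \<gamma> \<delta> :: complex
  assumes H: "\<forall>s. c1 * s^d + c2 + c3 * (\<alpha> * s+\<beta>)^d + c4 * (\<gamma> * s+\<delta>)^d = 0"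
    and d: "d \<ge> 1"
  shows "c1 + c3*\<alpha>^d + c4*\<gamma>^d = 0" "c2 + c3*\<beta>^d + c4*\<delta>^d = 0"
    "\<And>k. 0 < k \<Longrightarrow> k < d \<Longrightarrow> c3*\<alpha>^k*\<beta>^(d-k) + c4*\<gamma>^k*\<delta>^(d-k) = 0"
proof -
  define C where "C i = (if i = d then c1 else 0) + (if i = 0 then c2 else 0)
     + c3 * of_nat (d choose i) * \<alpha>^i * \<beta>^(d-i) + c4 * of_nat (d choose i) * \<gamma>^i * \<delta>^(d-i)" for i
  have S: "\<forall>s. (\<Sum>i\<le>d. C i * s^i) = 0"
  proof
    fix s :: complex
    have bin: "(a * s + b)^d = (\<Sum>i\<le>d. of_nat (d choose i) * a^i * b^(d-i) * s^i)" for a b :: complex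
      unfolding binomial_ring[of "a * s" b d] by (simp add: power_mult_distrib mult_ac)
    have "(\<Sum>i\<le>d. (if i = d then c1 else 0) * s^i) = (\<Sum>i\<le>d. if i = d then c1 * s^d else 0)"
      by (rule sum.cong) auto
    then have e1: "(\<Sum>i\<le>d. (if i = d then c1 else 0) * s^i) = c1 * s^d" by simp
    have "(\<Sum>i\<le>d. (if i = 0 then c2 else 0) * s^i) = (\<Sum>i\<le>d. if i = 0 then c2 else 0)"
      by (rule sum.cong) auto
    then have e2: "(\<Sum>i\<le>d. (if i = 0 then c2 else 0) * s^i) = c2" by simp
    have "(\<Sum>i\<le>d. C i * s^i) = (\<Sum>i\<le>d. (if i = d then c1 else 0) * s^i) + (\<Sum>i\<le>d. (if i = 0 then c2 else 0) * s^i)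
       + c3 * (\<Sum>i\<le>d. of_nat (d choose i) * \<alpha>^i * \<beta>^(d-i) * s^i) + c4 * (\<Sum>i\<le>d. of_nat (d choose i) * \<gamma>^i * \<delta>^(d-i) * s^i)"
      unfolding C_def by (simp add: sum.distrib sum_distrib_left algebra_simps)
    also have "\<dots> = c1 * s^d + c2 + c3 * (\<alpha> * s+\<beta>)^d + c4 * (\<gamma> * s+\<delta>)^d"
      unfolding e1 e2 bin by simp
    also have "\<dots> = 0" using H by simp
    finally show "(\<Sum>i\<le>d. C i * s^i) = 0" .
  qed
  have C0: "C k = 0" if "k \<le> d" for k using S polyfun_eq_0[of C d] that by blast
  show "c1 + c3*\<alpha>^d + c4*\<gamma>^d = 0" using C0[of d] d by (simp add: C_def)
  show "c2 + c3*\<beta>^d + c4*\<delta>^d = 0" using C0[of 0] d by (simp add: C_def)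
  fix k assume k: "0 < k" "k < d"
  have "of_nat (d choose k) * (c3*\<alpha>^k*\<beta>^(d-k) + c4*\<gamma>^k*\<delta>^(d-k)) = (0::complex)"
    using C0[of k] k by (simp add: C_def algebra_simps)
  moreover have "(of_nat (d choose k)::complex) \<noteq> 0" using k by simp
  ultimately show "c3*\<alpha>^k*\<beta>^(d-k) + c4*\<gamma>^k*\<delta>^(d-k) = 0" by simp
qed

lemma W:
  fixes c1 c2 c3 c4 \<alpha> \<beta> \<gamma> \<delta> :: complex
  assumes H: "\<forall>s. c1 * s^d + c2 + c3 * (\<alpha> * s+\<beta>)^d + c4 * (\<gamma> * s+\<delta>)^d = 0"
    and d: "d \<ge> 3" and c: "c1 \<noteq> 0" "c2 \<noteq> 0" "c3 \<noteq> 0" "c4 \<noteq> 0"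
  shows "(\<alpha> = 0 \<and> \<delta> = 0 \<and> c1 + c4*\<gamma>^d = 0 \<and> c2 + c3*\<beta>^d = 0) \<or>
         (\<beta> = 0 \<and> \<gamma> = 0 \<and> c1 + c3*\<alpha>^d = 0 \<and> c2 + c4*\<delta>^d = 0)"
proof -
  have d1: "d \<ge> 1" using d by simp
  note E = coeffs_W[OF H d1]
  have E0: "c1 + c3*\<alpha>^d + c4*\<gamma>^d = 0" by (rule E(1))
  have Ed: "c2 + c3*\<beta>^d + c4*\<delta>^d = 0" by (rule E(2))
  have E1: "c3*\<alpha>*\<beta>^(d-1) + c4*\<gamma>*\<delta>^(d-1) = 0" using E(3)[of 1] d by simp
  have E2: "c3*\<alpha>^2*\<beta>^(d-2) + c4*\<gamma>^2*\<delta>^(d-2) = 0" using E(3)[of 2] d by simp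
  have Ed1: "c3*\<alpha>^(d-1)*\<beta> + c4*\<gamma>^(d-1)*\<delta> = 0" using E(3)[of "d-1"] d
    by (simp add: Suc_diff_Suc numeral_2_eq_2)
  have z: "(0::complex)^d = 0" "(0::complex)^(d-1) = 0" using d by auto
  show ?thesis
  proof (cases "\<alpha> = 0")
    case True
    then have "c4*\<gamma>*\<delta>^(d-1) = 0" using E1 z by simp
    then have "\<gamma> = 0 \<or> \<delta> = 0" using c by (auto simp: power_0_left split: if_splits)
    moreover have "\<gamma> \<noteq> 0" using E0 True c d by (auto simp: power_0_left)
    ultimately show ?thesis using True E0 Ed d by (auto simp: power_0_left)
  next
    case a: False
    show ?thesis
    proof (cases "\<beta> = 0")
      case True
      then have "c4*\<gamma>^(d-1)*\<delta> = 0" using Ed1 z by simp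
      then have "\<gamma> = 0 \<or> \<delta> = 0" using c by (auto simp: power_0_left split: if_splits)
      moreover have "\<delta> \<noteq> 0" using Ed True c d by (auto simp: power_0_left)
      ultimately show ?thesis using True E0 Ed d by (auto simp: power_0_left)
    next
      case b: False
      have "c3*\<alpha>*\<beta>^(d-1) \<noteq> 0" using a b c by simp
      then have gd: "\<gamma> \<noteq> 0" "\<delta> \<noteq> 0" using E1 d by (auto simp: power_0_left)
      obtain e where de: "d = Suc (Suc (Suc e))" using d by (intro that[of "d-3"]) simp
      have "c4*\<gamma>*\<delta>^(d-2)*(\<alpha>*\<delta> - \<beta>*\<gamma>) = \<alpha>*(c3*\<alpha>*\<beta>^(d-1) + c4*\<gamma>*\<delta>^(d-1)) - \<beta>*(c3*\<alpha>^2*\<beta>^(d-2) + c4*\<gamma>^2*\<delta>^(d-2))"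
        unfolding de by (simp add: algebra_simps power2_eq_square)
      also have "\<dots> = 0" using E1 E2 by simp
      finally have "\<alpha>*\<delta> = \<beta>*\<gamma>" using gd c by simp
      define l where "l = \<gamma>/\<alpha>"
      have g: "\<gamma> = l*\<alpha>" and dl: "\<delta> = l*\<beta>" using a \<open>\<alpha>*\<delta> = \<beta>*\<gamma>\<close> by (auto simp: l_def field_simps)
      have "(c3 + c4*l^d)*(\<alpha>*\<beta>^(d-1)) = c3*\<alpha>*\<beta>^(d-1) + c4*\<gamma>*\<delta>^(d-1)"
        unfolding g dl de by (simp add: algebra_simps power_mult_distrib)
      then have "(c3 + c4*l^d)*(\<alpha>*\<beta>^(d-1)) = 0" using E1 by simp
      then have l0: "c3 + c4*l^d = 0" using a b by simp
      have "c1 = c1 + c3*\<alpha>^d + c4*\<gamma>^d - (c3 + c4*l^d)*\<alpha>^d"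
        unfolding g by (simp add: power_mult_distrib algebra_simps)
      then have "c1 = 0" using E0 l0 by simp
      then show ?thesis using c by simp
    qed
  qed
qed

definition prp :: "nat \<Rightarrow> complex \<Rightarrow> complex \<Rightarrow> complex \<Rightarrow> complex \<Rightarrow> complex \<Rightarrow> complex \<Rightarrow> bool" where
  "prp d c c' a b a' b' \<longleftrightarrow> (\<exists>l. a' = l*a \<and> b' = l*b \<and> c + c'*l^d = 0)"

lemma prp_sym: assumes "prp d c c' a b a' b'" "c \<noteq> 0" "d > 0" shows "prp d c' c a' b' a b"
proof -
  obtain l where l: "a' = l*a" "b' = l*b" "c + c'*l^d = 0" using assms(1) unfolding prp_def by blast
  have l0: "l \<noteq> 0" using l(3) assms(2,3) by (cases d) auto
  have "c' + c*(1/l)^d = (c + c'*l^d) / l^d" using l0 by (simp add: field_simps power_one_over)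
  also have "\<dots> = 0" using l(3) by simp
  finally show ?thesis unfolding prp_def using l l0 by (intro exI[of _ "1/l"]) auto
qed

lemma cr1: fixes a1 a2 b1 b2 x y m :: complex
  assumes "m = a1*b2 - a2*b1" "m \<noteq> 0"
  shows "((x*b2 - y*a2)/m)*a1 + ((y*a1 - x*b1)/m)*a2 = x"
    "((x*b2 - y*a2)/m)*b1 + ((y*a1 - x*b1)/m)*b2 = y"
proof -
  have "(x*b2 - y*a2)*a1 + (y*a1 - x*b1)*a2 = x*m" "(x*b2 - y*a2)*b1 + (y*a1 - x*b1)*b2 = y*m"
    unfolding assms(1) by (simp_all add: algebra_simps)
  then show "((x*b2 - y*a2)/m)*a1 + ((y*a1 - x*b1)/m)*a2 = x"
    "((x*b2 - y*a2)/m)*b1 + ((y*a1 - x*b1)/m)*b2 = y" using assms(2)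
    by (simp_all add: add_divide_distrib[symmetric] times_divide_eq_left)
qed

lemma W2:
  fixes c1 c2 c3 c4 a1 a2 a3 a4 b1 b2 b3 b4 :: complex
  assumes H: "\<forall>s t. c1*(a1 * s+b1*t)^d + c2*(a2 * s+b2*t)^d + c3*(a3 * s+b3*t)^d + c4*(a4 * s+b4*t)^d = 0"
    and d: "d \<ge> 3" and c: "c1 \<noteq> 0" "c2 \<noteq> 0" "c3 \<noteq> 0" "c4 \<noteq> 0"
    and m: "a1*b2 - a2*b1 \<noteq> 0"
  shows "(prp d c2 c3 a2 b2 a3 b3 \<and> prp d c1 c4 a1 b1 a4 b4) \<or>
         (prp d c1 c3 a1 b1 a3 b3 \<and> prp d c2 c4 a2 b2 a4 b4)"
proof -
  define m where "m = a1*b2 - a2*b1"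
  define \<alpha> where "\<alpha> = (a3*b2 - b3*a2)/m"
  define \<beta> where "\<beta> = (b3*a1 - a3*b1)/m"
  define \<gamma> where "\<gamma> = (a4*b2 - b4*a2)/m"
  define \<delta> where "\<delta> = (b4*a1 - a4*b1)/m"
  have m0: "m \<noteq> 0" using m m_def by simp
  have e3: "a3 = \<alpha>*a1 + \<beta>*a2" "b3 = \<alpha>*b1 + \<beta>*b2"
    using cr1[OF m_def m0, of a3 b3] unfolding \<alpha>_def \<beta>_def by simp_all
  have e4: "a4 = \<gamma>*a1 + \<delta>*a2" "b4 = \<gamma>*b1 + \<delta>*b2"
    using cr1[OF m_def m0, of a4 b4] unfolding \<gamma>_def \<delta>_def by simp_all
  have HW: "\<forall>u. c1 * u^d + c2 + c3 * (\<alpha> * u+\<beta>)^d + c4 * (\<gamma> * u+\<delta>)^d = 0"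
  proof
    fix u
    define s where "s = (u*b2 - 1*b1)/m"
    define t where "t = (1*a1 - u*a2)/m"
    have mm: "m = a1*b2 - b1*a2" unfolding m_def by (simp add: mult.commute)
    note C = cr1[OF mm m0, of u 1]
    have x1: "a1 * s+b1*t = u" using C(1) unfolding s_def t_def by (simp add: mult.commute)
    have x2: "a2 * s+b2*t = 1" using C(2) unfolding s_def t_def by (simp add: mult.commute)
    have "a3 * s+b3*t = \<alpha>*(a1 * s+b1*t) + \<beta>*(a2 * s+b2*t)" unfolding e3 by (simp add: algebra_simps)
    then have x3: "a3 * s+b3*t = \<alpha>*u+\<beta>" using x1 x2 by simp
    have "a4 * s+b4*t = \<gamma>*(a1 * s+b1*t) + \<delta>*(a2 * s+b2*t)" unfolding e4 by (simp add: algebra_simps)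
    then have x4: "a4 * s+b4*t = \<gamma>*u+\<delta>" using x1 x2 by simp
    show "c1 * u^d + c2 + c3 * (\<alpha> * u+\<beta>)^d + c4 * (\<gamma> * u+\<delta>)^d = 0"
      using H[rule_format, of s t] x1 x2 x3 x4 by simp
  qed
  from W[OF HW d c] show ?thesis
  proof
    assume A: "\<alpha> = 0 \<and> \<delta> = 0 \<and> c1 + c4*\<gamma>^d = 0 \<and> c2 + c3*\<beta>^d = 0"
    then have "prp d c2 c3 a2 b2 a3 b3" unfolding prp_def using e3 by (intro exI[of _ \<beta>]) auto
    moreover have "prp d c1 c4 a1 b1 a4 b4" unfolding prp_def using e4 A by (intro exI[of _ \<gamma>]) auto
    ultimately show ?thesis by blast
  next
    assume A: "\<beta> = 0 \<and> \<gamma> = 0 \<and> c1 + c3*\<alpha>^d = 0 \<and> c2 + c4*\<delta>^d = 0"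
    then have "prp d c1 c3 a1 b1 a3 b3" unfolding prp_def using e3 by (intro exI[of _ \<alpha>]) auto
    moreover have "prp d c2 c4 a2 b2 a4 b4" unfolding prp_def using e4 A by (intro exI[of _ \<delta>]) auto
    ultimately show ?thesis by blast
  qed
qed

lemma eta_inj:
  fixes \<eta> :: complex
  assumes "\<forall>m. 0 < m \<and> m < d \<longrightarrow> \<eta> ^ m \<noteq> 1" "i < d" "j < d" "\<eta>^i = \<eta>^j" "\<eta> \<noteq> 0"
  shows "i = j"
proof (rule ccontr)
  assume ne: "i \<noteq> j"
  have *: "\<eta>^(j-i) = 1" if "i < j" "\<eta>^i = \<eta>^j" for i j
  proof -
    have "\<eta>^j = \<eta>^i * \<eta>^(j-i)" using that by (metis le_add_diff_inverse less_imp_le power_add)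
    then show ?thesis using that assms(5) by simp
  qed
  show False
  proof (cases "i < j")
    case True then show ?thesis using *[OF True assms(4)] assms(1,3) by auto
  next
    case False then have "j < i" using ne by simp
    then show ?thesis using *[OF \<open>j < i\<close> assms(4)[symmetric]] assms(1,2) by auto
  qed
qed

lemma root1:
  fixes \<eta> z :: complex
  assumes d: "d \<ge> 1" and e1: "\<eta> ^ d = 1" and prim: "\<forall>m. 0 < m \<and> m < d \<longrightarrow> \<eta> ^ m \<noteq> 1"
    and z: "z ^ d = 1"
  shows "\<exists>i<d. z = \<eta>^i"
proof -
  define c :: "nat \<Rightarrow> complex" where "c i = (if i = d then 1 else if i = 0 then -1 else 0)" for i
  have pz: "(\<Sum>i\<le>d. c i * x^i) = x^d - 1" for x
  proof -
    have "(\<Sum>i\<le>d. c i * x^i) = (\<Sum>i\<le>d. (if i = d then x^d else 0) + (if i = 0 then -1 else 0))"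
      using d by (intro sum.cong) (auto simp: c_def)
    also have "\<dots> = x^d - 1" by (simp add: sum.distrib)
    finally show ?thesis .
  qed
  have ex: "\<exists>k. k \<le> d \<and> c k \<noteq> 0" by (intro exI[of _ d]) (simp add: c_def)
  define S where "S = {x. (\<Sum>i\<le>d. c i * x^i) = 0}"
  have fS: "finite S" unfolding S_def by (rule polyfun_rootbound_finite[OF ex])
  have cS: "card S \<le> d" unfolding S_def by (rule polyfun_rootbound_card[OF ex])
  have Sx: "x \<in> S \<longleftrightarrow> x^d = 1" for x unfolding S_def pz by simp
  have en: "\<eta> \<noteq> 0" using e1 d by (auto simp: power_0_left)
  define R where "R = (\<lambda>i. \<eta>^i) ` {..<d}"
  have inj: "inj_on (\<lambda>i. \<eta>^i) {..<d}" using eta_inj[OF prim _ _ _ en] by (auto simp: inj_on_def)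
  have cR: "card R = d" unfolding R_def using card_image[OF inj] by simp
  have RS: "R \<subseteq> S"
  proof
    fix x assume "x \<in> R"
    then obtain i where "x = \<eta>^i" unfolding R_def by blast
    then have "x^d = 1" by (metis e1 mult.commute power_mult power_one)
    then show "x \<in> S" using Sx by simp
  qed
  have "R = S" using card_subset_eq[OF fS RS] cR cS card_mono[OF fS RS] by simp
  moreover have "z \<in> S" using z Sx by simp
  ultimately show ?thesis unfolding R_def by auto
qed

lemma rootm1:
  fixes \<eta> z v :: complex
  assumes d: "d \<ge> 1" and e1: "\<eta> ^ d = 1" and prim: "\<forall>m. 0 < m \<and> m < d \<longrightarrow> \<eta> ^ m \<noteq> 1"
    and v: "v ^ d = -1" and z: "z ^ d = -1"
  shows "\<exists>i<d. z = v * \<eta>^i"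
proof -
  have v0: "v \<noteq> 0" using v d by (auto simp: power_0_left)
  have "(z/v)^d = 1" using v z v0 by (simp add: power_divide)
  then obtain i where "i < d" "z/v = \<eta>^i" using root1[OF d e1 prim] by blast
  then show ?thesis using v0 by (auto simp: field_simps)
qed

lemma eta_mod:
  fixes \<eta> :: complex
  assumes "\<eta>^d = 1" shows "\<eta>^n = \<eta>^(n mod d)"
proof -
  have "\<eta>^n = \<eta>^(d*(n div d) + n mod d)" by (simp only: mult_div_mod_eq)
  also have "\<dots> = \<eta>^(n mod d)" by (simp only: power_add power_mult assms power_one mult_1)
  finally show ?thesis .
qed

lemma line_eq:
  fixes a b :: "complex^4" and j1 j2 j3 j4 :: 4 and l m :: complex
  assumes indep: "\<forall>s t. s *s a + t *s b = 0 \<longrightarrow> s = 0 \<and> t = 0"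
    and U: "\<forall>i. i = j1 \<or> i = j2 \<or> i = j3 \<or> i = j4"
    and h: "a$j2 = l*a$j1" "b$j2 = l*b$j1" "a$j4 = m*a$j3" "b$j4 = m*b$j3"
  shows "{s *s a + t *s b | s t. s *s a + t *s b \<noteq> 0} = {p. p \<noteq> 0 \<and> p$j2 = l*p$j1 \<and> p$j4 = m*p$j3}"
proof -
  have zero: "x = 0" if "x$j1 = 0" "x$j3 = 0" "x$j2 = l*x$j1" "x$j4 = m*x$j3" for x :: "complex^4"
  proof -
    have "x$i = 0" for i using U[rule_format, of i] that by auto
    then show ?thesis by (simp add: vec_eq_iff)
  qed
  define M where "M = a$j1*b$j3 - b$j1*a$j3"
  have M0: "M \<noteq> 0"
  proof
    assume M: "M = 0"
    have comb: "s *s a + t *s b = 0" if "s*a$j1 + t*b$j1 = 0" "s*a$j3 + t*b$j3 = 0" for s t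
    proof -
      have "(s *s a + t *s b)$j2 = l*(s*a$j1 + t*b$j1)" "(s *s a + t *s b)$j4 = m*(s*a$j3+t*b$j3)"
        using h by (simp_all add: algebra_simps)
      then show ?thesis by (intro zero) (use that in simp_all)
    qed
    show False
    proof (cases "a$j1 = 0 \<and> b$j1 = 0")
      case True
      have c3: "b$j3 *s a + (- a$j3) *s b = 0" by (rule comb) (use True M M_def in \<open>auto simp: algebra_simps\<close>)
      have "a$j3 = 0 \<and> b$j3 = 0" using indep[rule_format, OF c3] by simp
      then have "a = 0" using True by (intro zero) (auto simp: h)
      then show False using indep[rule_format, of 1 0] by simp
    next
      case False
      have c1: "b$j1 *s a + (- a$j1) *s b = 0" by (rule comb) (use M M_def in \<open>auto simp: algebra_simps\<close>)
      show False using indep[rule_format, OF c1] False by simp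
    qed
  qed
  show ?thesis
  proof (intro set_eqI iffI)
    fix p assume "p \<in> {s *s a + t *s b | s t. s *s a + t *s b \<noteq> 0}"
    then obtain s t where "p = s *s a + t *s b" "p \<noteq> 0" by blast
    then show "p \<in> {p. p \<noteq> 0 \<and> p$j2 = l*p$j1 \<and> p$j4 = m*p$j3}" using h by (simp add: algebra_simps)
  next
    fix p assume p: "p \<in> {p. p \<noteq> 0 \<and> p$j2 = l*p$j1 \<and> p$j4 = m*p$j3}"
    define s where "s = (p$j1*b$j3 - p$j3*b$j1)/M"
    define t where "t = (p$j3*a$j1 - p$j1*a$j3)/M"
    note C = cr1[OF M_def M0, of "p$j1" "p$j3"]
    have e1: "s*a$j1 + t*b$j1 = p$j1" using C(1) unfolding s_def t_def .
    have e3: "s*a$j3 + t*b$j3 = p$j3" using C(2) unfolding s_def t_def .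
    have "(s *s a + t *s b - p)$j2 = l*(s*a$j1 + t*b$j1 - p$j1)" "(s *s a + t *s b - p)$j4 = m*(s*a$j3+t*b$j3 - p$j3)"
      using h p by (simp_all add: algebra_simps)
    then have "s *s a + t *s b - p = 0"
      by (intro zero) (use e1 e3 in simp_all)
    then have "p = s *s a + t *s b" by simp
    then show "p \<in> {s *s a + t *s b | s t. s *s a + t *s b \<noteq> 0}" using p by blast
  qed
qed

lemma minors:
  fixes a b :: "complex^4"
  assumes indep: "\<forall>s t. s *s a + t *s b = 0 \<longrightarrow> s = 0 \<and> t = 0"
  shows "(a$1*b$2 - a$2*b$1 \<noteq> 0) \<or> (a$1*b$3 - a$3*b$1 \<noteq> 0) \<or> (a$1*b$4 - a$4*b$1 \<noteq> 0) \<or> (a$2*b$3 - a$3*b$2 \<noteq> 0) \<or> (a$2*b$4 - a$4*b$2 \<noteq> 0) \<or> (a$3*b$4 - a$4*b$3 \<noteq> 0)"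
proof (rule ccontr)
  assume "\<not> ((a$1*b$2 - a$2*b$1 \<noteq> 0) \<or> (a$1*b$3 - a$3*b$1 \<noteq> 0) \<or> (a$1*b$4 - a$4*b$1 \<noteq> 0) \<or> (a$2*b$3 - a$3*b$2 \<noteq> 0) \<or> (a$2*b$4 - a$4*b$2 \<noteq> 0) \<or> (a$3*b$4 - a$4*b$3 \<noteq> 0))"
  then have E: "\<forall>j k. a$j*b$k = a$k*b$j" unfolding forall_4 by (simp add: mult.commute)
  show False
  proof (cases "a = 0")
    case True then show False using indep[rule_format, of 1 0] by simp
  next
    case False
    then obtain j where j: "a$j \<noteq> 0" by (auto simp: vec_eq_iff)
    have c: "b$j *s a + (- a$j) *s b = 0" using E by (simp add: vec_eq_iff mult.commute)
    show False using indep[rule_format, OF c] j by simp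
  qed
qed

lemma classify:
  fixes a b :: "complex^4"
  assumes indep: "\<forall>s t. s *s a + t *s b = 0 \<longrightarrow> s = 0 \<and> t = 0"
    and d: "d \<ge> 3"
    and Fm: "\<forall>s t. s *s a + t *s b \<noteq> 0 \<longrightarrow> s *s a + t *s b \<in> Fermat d"
  shows "(prp d 1 (-1) (a$1) (b$1) (a$2) (b$2) \<and> prp d (-1) 1 (a$3) (b$3) (a$4) (b$4)) \<or>
         (prp d (-1) 1 (a$3) (b$3) (a$1) (b$1) \<and> prp d 1 (-1) (a$4) (b$4) (a$2) (b$2)) \<or>
         (prp d 1 1 (a$4) (b$4) (a$1) (b$1) \<and> prp d (-1) (-1) (a$3) (b$3) (a$2) (b$2))"
proof -
  have d0: "d > 0" using d by simp
  have S1: "prp d c 1 x y x' y'" if "prp d 1 c x' y' x y" for c x y x' y'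
    using prp_sym[OF that _ d0] by simp
  have S2: "prp d c (-1) x y x' y'" if "prp d (-1) c x' y' x y" for c x y x' y'
    using prp_sym[OF that _ d0] by simp
  have H: "\<forall>s t. (a$1 * s+b$1*t)^d - (a$2 * s+b$2*t)^d - (a$3 * s+b$3*t)^d + (a$4 * s+b$4*t)^d = 0"
  proof (intro allI)
    fix s t
    define p where "p = s *s a + t *s b"
    have comp: "p$j = a$j * s+b$j*t" for j unfolding p_def by (simp add: mult.commute)
    show "(a$1 * s+b$1*t)^d - (a$2 * s+b$2*t)^d - (a$3 * s+b$3*t)^d + (a$4 * s+b$4*t)^d = 0"
    proof (cases "p = 0")
      case True
      then have "a$j * s+b$j*t = 0" for j using comp by simp
      then show ?thesis using d0 by (simp add: power_0_left)
    next
      case False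
      then have "p \<in> Fermat d" using Fm p_def by blast
      then show ?thesis unfolding Fermat_def using comp[of 1] comp[of 2] comp[of 3] comp[of 4] by simp
    qed
  qed
  from minors[OF indep] show ?thesis
  proof (elim disjE)
  
    assume M: "a$1*b$2 - a$2*b$1 \<noteq> 0"
    have H': "\<forall>s t. 1*(a$1 * s+b$1*t)^d + (-1)*(a$2 * s+b$2*t)^d + (-1)*(a$3 * s+b$3*t)^d + 1*(a$4 * s+b$4*t)^d = 0" using H by (simp add: algebra_simps)
    have "(prp d (-1) (-1) (a$2) (b$2) (a$3) (b$3) \<and> prp d 1 1 (a$1) (b$1) (a$4) (b$4)) \<or>
         (prp d 1 (-1) (a$1) (b$1) (a$3) (b$3) \<and> prp d (-1) 1 (a$2) (b$2) (a$4) (b$4))"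
      by (rule W2[OF H' d]) (use M in simp_all)
    then show ?thesis using S1 S2 by blast
  next
    assume M: "a$1*b$3 - a$3*b$1 \<noteq> 0"
    have H': "\<forall>s t. 1*(a$1 * s+b$1*t)^d + (-1)*(a$3 * s+b$3*t)^d + (-1)*(a$2 * s+b$2*t)^d + 1*(a$4 * s+b$4*t)^d = 0" using H by (simp add: algebra_simps)
    have "(prp d (-1) (-1) (a$3) (b$3) (a$2) (b$2) \<and> prp d 1 1 (a$1) (b$1) (a$4) (b$4)) \<or>
         (prp d 1 (-1) (a$1) (b$1) (a$2) (b$2) \<and> prp d (-1) 1 (a$3) (b$3) (a$4) (b$4))"
      by (rule W2[OF H' d]) (use M in simp_all)
    then show ?thesis using S1 S2 by blast
  next
    assume M: "a$1*b$4 - a$4*b$1 \<noteq> 0"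
    have H': "\<forall>s t. 1*(a$1 * s+b$1*t)^d + 1*(a$4 * s+b$4*t)^d + (-1)*(a$2 * s+b$2*t)^d + (-1)*(a$3 * s+b$3*t)^d = 0" using H by (simp add: algebra_simps)
    have "(prp d 1 (-1) (a$4) (b$4) (a$2) (b$2) \<and> prp d 1 (-1) (a$1) (b$1) (a$3) (b$3)) \<or>
         (prp d 1 (-1) (a$1) (b$1) (a$2) (b$2) \<and> prp d 1 (-1) (a$4) (b$4) (a$3) (b$3))"
      by (rule W2[OF H' d]) (use M in simp_all)
    then show ?thesis using S1 S2 by blast
  next
    assume M: "a$2*b$3 - a$3*b$2 \<noteq> 0"
    have H': "\<forall>s t. (-1)*(a$2 * s+b$2*t)^d + (-1)*(a$3 * s+b$3*t)^d + 1*(a$1 * s+b$1*t)^d + 1*(a$4 * s+b$4*t)^d = 0" using H by (simp add: algebra_simps)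
    have "(prp d (-1) 1 (a$3) (b$3) (a$1) (b$1) \<and> prp d (-1) 1 (a$2) (b$2) (a$4) (b$4)) \<or>
         (prp d (-1) 1 (a$2) (b$2) (a$1) (b$1) \<and> prp d (-1) 1 (a$3) (b$3) (a$4) (b$4))"
      by (rule W2[OF H' d]) (use M in simp_all)
    then show ?thesis using S1 S2 by blast
  next
    assume M: "a$2*b$4 - a$4*b$2 \<noteq> 0"
    have H': "\<forall>s t. (-1)*(a$2 * s+b$2*t)^d + 1*(a$4 * s+b$4*t)^d + 1*(a$1 * s+b$1*t)^d + (-1)*(a$3 * s+b$3*t)^d = 0" using H by (simp add: algebra_simps)
    have "(prp d 1 1 (a$4) (b$4) (a$1) (b$1) \<and> prp d (-1) (-1) (a$2) (b$2) (a$3) (b$3)) \<or>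
         (prp d (-1) 1 (a$2) (b$2) (a$1) (b$1) \<and> prp d 1 (-1) (a$4) (b$4) (a$3) (b$3))"
      by (rule W2[OF H' d]) (use M in simp_all)
    then show ?thesis using S1 S2 by blast
  next
    assume M: "a$3*b$4 - a$4*b$3 \<noteq> 0"
    have H': "\<forall>s t. (-1)*(a$3 * s+b$3*t)^d + 1*(a$4 * s+b$4*t)^d + 1*(a$1 * s+b$1*t)^d + (-1)*(a$2 * s+b$2*t)^d = 0" using H by (simp add: algebra_simps)
    have "(prp d 1 1 (a$4) (b$4) (a$1) (b$1) \<and> prp d (-1) (-1) (a$3) (b$3) (a$2) (b$2)) \<or>
         (prp d (-1) 1 (a$3) (b$3) (a$1) (b$1) \<and> prp d 1 (-1) (a$4) (b$4) (a$2) (b$2))"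
      by (rule W2[OF H' d]) (use M in simp_all)
    then show ?thesis using S1 S2 by blast
  qed
qed


lemma fam0: "k < d \<Longrightarrow> i < d \<Longrightarrow> L0 \<eta> k i \<in> Lfam d \<eta> v 0"
  unfolding Lfam_def by (simp only: simp_thms if_True) blast
lemma fam1: "k < d \<Longrightarrow> i < d \<Longrightarrow> L1 \<eta> k i \<in> Lfam d \<eta> v 1"
  unfolding Lfam_def by (simp only: simp_thms if_True if_False one_neq_zero) blast
lemma fam2: "k < d \<Longrightarrow> i < d \<Longrightarrow> L2 \<eta> v k i \<in> Lfam d \<eta> v 2"
  unfolding Lfam_def by (simp only: simp_thms if_True if_False zero_neq_numeral numeral_One[symmetric] numeral_eq_iff semiring_norm) blast

lemma kfix:
  fixes \<eta> :: complex
  assumes "\<eta>^d = 1" "i < d" "j < d"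
  shows "\<exists>k<d. \<eta>^(k+i) = \<eta>^j"
proof (intro exI conjI)
  define k where "k = (j + d - i) mod d"
  show "k < d" using assms(2) by (simp add: k_def)
  have "(k + i) mod d = (j + d - i + i) mod d" unfolding k_def by (simp add: mod_add_left_eq)
  also have "\<dots> = j" using assms(2,3) by simp
  finally show "\<eta>^(k+i) = \<eta>^j" using eta_mod[OF assms(1), of "k+i"] by simp
qed

lemma U4: "\<forall>i::4. i = 1 \<or> i = 2 \<or> i = 3 \<or> i = 4"
  "\<forall>i::4. i = 3 \<or> i = 1 \<or> i = 4 \<or> i = 2" "\<forall>i::4. i = 4 \<or> i = 1 \<or> i = 3 \<or> i = 2"
  using exhaust_4 by blast+

lemma line_in_fam:
  fixes d :: nat and \<eta> v :: complex
  assumes d: "d \<ge> 3"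
    and e1: "\<eta> ^ d = 1" and prim: "\<forall>m. 0 < m \<and> m < d \<longrightarrow> \<eta> ^ m \<noteq> 1"
    and v: "v ^ d = -1"
    and L: "L \<in> lines_on (Fermat d)"
  shows "L \<in> Lfam d \<eta> v 0 \<union> Lfam d \<eta> v 1 \<union> Lfam d \<eta> v 2"
proof -
  have d1: "d \<ge> 1" using d by simp
  obtain a b where indep: "\<forall>s t. s *s a + t *s b = 0 \<longrightarrow> s = 0 \<and> t = 0"
    and Ld: "L = {s *s a + t *s b | s t. s *s a + t *s b \<noteq> 0}"
    using L unfolding lines_on_def is_line_def by blast
  have Fm: "\<forall>s t. s *s a + t *s b \<noteq> 0 \<longrightarrow> s *s a + t *s b \<in> Fermat d"
    using L unfolding lines_on_def Ld by blast
  from classify[OF indep d Fm] show ?thesis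
  proof (elim disjE conjE)
    assume A: "prp d 1 (-1) (a$1) (b$1) (a$2) (b$2)" and B: "prp d (-1) 1 (a$3) (b$3) (a$4) (b$4)"
    obtain l where l: "a$2 = l*a$1" "b$2 = l*b$1" "1 + (-1)*l^d = 0" using A unfolding prp_def by blast
    obtain m where m: "a$4 = m*a$3" "b$4 = m*b$3" "-1 + 1*m^d = 0" using B unfolding prp_def by blast
    obtain i where i: "i < d" "l = \<eta>^i" using root1[OF d1 e1 prim, of l] l(3) by auto
    obtain k where k: "k < d" "m = \<eta>^k" using root1[OF d1 e1 prim, of m] m(3) by auto
    have "L = L0 \<eta> k i" unfolding Ld L0_def
      using line_eq[OF indep U4(1) l(1,2) m(1,2)] i k by simp
    then show ?thesis using fam0[OF k(1) i(1), of \<eta> v] by simp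
  next
    assume A: "prp d (-1) 1 (a$3) (b$3) (a$1) (b$1)" and B: "prp d 1 (-1) (a$4) (b$4) (a$2) (b$2)"
    obtain l where l: "a$1 = l*a$3" "b$1 = l*b$3" "-1 + 1*l^d = 0" using A unfolding prp_def by blast
    obtain m where m: "a$2 = m*a$4" "b$2 = m*b$4" "1 + (-1)*m^d = 0" using B unfolding prp_def by blast
    obtain j where j: "j < d" "l = \<eta>^j" using root1[OF d1 e1 prim, of l] l(3) by auto
    obtain i where i: "i < d" "m = \<eta>^i" using root1[OF d1 e1 prim, of m] m(3) by auto
    obtain k where k: "k < d" "\<eta>^(k+i) = \<eta>^j" using kfix[OF e1 i(1) j(1)] by blast
    have "L = {p. p \<noteq> 0 \<and> p$1 = l*p$3 \<and> p$2 = m*p$4}" unfolding Ld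
      using line_eq[OF indep U4(2) l(1,2) m(1,2)] by simp
    also have "\<dots> = L1 \<eta> k i" unfolding L1_def using i j k by simp
    finally have "L = L1 \<eta> k i" .
    then show ?thesis using fam1[OF k(1) i(1), of \<eta> v] by simp
  next
    assume A: "prp d 1 1 (a$4) (b$4) (a$1) (b$1)" and B: "prp d (-1) (-1) (a$3) (b$3) (a$2) (b$2)"
    obtain l where l: "a$1 = l*a$4" "b$1 = l*b$4" "1 + 1*l^d = 0" using A unfolding prp_def by blast
    obtain m where m: "a$2 = m*a$3" "b$2 = m*b$3" "-1 + (-1)*m^d = 0" using B unfolding prp_def by blast
    have "l^d = -1" using l(3) by (simp add: add_eq_0_iff)
    then obtain i where i: "i < d" "l = v * \<eta>^i" using rootm1[OF d1 e1 prim v, of l] by auto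
    have "m^d = -1" using m(3) by (simp add: add_eq_0_iff)
    then obtain j where j: "j < d" "m = v * \<eta>^j" using rootm1[OF d1 e1 prim v, of m] by auto
    obtain k where k: "k < d" "\<eta>^(k+i) = \<eta>^j" using kfix[OF e1 i(1) j(1)] by blast
    have "L = {p. p \<noteq> 0 \<and> p$1 = l*p$4 \<and> p$2 = m*p$3}" unfolding Ld
      using line_eq[OF indep U4(3) l(1,2) m(1,2)] by simp
    also have "\<dots> = L2 \<eta> v k i" unfolding L2_def using i j k by (simp add: mult.assoc)
    finally have "L = L2 \<eta> v k i" .
    then show ?thesis using fam2[OF k(1) i(1), of \<eta> v] by simp
  qed
qed



lemma sfrak_le:
  assumes "\<forall>A. A \<subseteq> X \<and> pairwise disjnt A \<longrightarrow> finite A \<and> card A \<le> n"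
  shows "sfrak X \<le> enat n"
  unfolding sfrak_def
proof (rule Sup_least)
  fix x assume "x \<in> {ecard A |A. A \<subseteq> X \<and> pairwise disjnt A}"
  then obtain A where "x = ecard A" "A \<subseteq> X" "pairwise disjnt A" by blast
  then show "x \<le> enat n" using assms by (auto simp: ecard_def)
qed

lemma sfrak_eq:
  assumes "\<forall>A. A \<subseteq> X \<and> pairwise disjnt A \<longrightarrow> finite A \<and> card A \<le> n"
    and "A0 \<subseteq> X" "pairwise disjnt A0" "finite A0" "card A0 = n"
  shows "sfrak X = enat n"
proof (rule antisym)
  show "sfrak X \<le> enat n" by (rule sfrak_le[OF assms(1)])
  have "ecard A0 \<in> {ecard A |A. A \<subseteq> X \<and> pairwise disjnt A}" using assms(2,3) by blast
  then have "ecard A0 \<le> sfrak X" unfolding sfrak_def by (rule Sup_upper)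
  then show "enat n \<le> sfrak X" using assms(4,5) by (simp add: ecard_def)
qed

lemma count_bound:
  assumes A: "A \<subseteq> (\<Union>i<d. P i)" and fin: "\<forall>i<d. finite (P i)"
    and c: "\<forall>i<d. \<forall>X\<in>P i. c i \<in> X" and pw: "pairwise disjnt A"
  shows "finite A \<and> card A \<le> d"
proof
  show fA: "finite A" using A fin by (meson finite_UN_I finite_lessThan finite_subset lessThan_iff)
  have "A = (\<Union>i<d. A \<inter> P i)" using A by blast
  then have "card A \<le> (\<Sum>i<d. card (A \<inter> P i))" using card_UN_le[of "{..<d}" "\<lambda>i. A \<inter> P i"] by simp
  also have "\<dots> \<le> (\<Sum>i<d. 1)"
  proof (rule sum_mono)
    fix i assume i: "i \<in> {..<d}"
    have "finite (A \<inter> P i)" using fA by simp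
    moreover have "\<forall>X\<in>A \<inter> P i. \<forall>Y\<in>A \<inter> P i. X = Y"
    proof (intro ballI)
      fix X Y assume XY: "X \<in> A \<inter> P i" "Y \<in> A \<inter> P i"
      then have "c i \<in> X" "c i \<in> Y" using c i by auto
      then have "\<not> disjnt X Y" by (auto simp: disjnt_def)
      then show "X = Y" using pw XY unfolding pairwise_def by blast
    qed
    ultimately show "card (A \<inter> P i) \<le> 1" using card_le_Suc0_iff_eq by (metis One_nat_def)
  qed
  also have "\<dots> = d" by simp
  finally show "card A \<le> d" .
qed

lemma lower_bound:
  assumes dis: "\<And>i j. i < d \<Longrightarrow> j < d \<Longrightarrow> i \<noteq> j \<Longrightarrow> disjnt (f i) (f j)"
    and ne: "\<And>i. i < d \<Longrightarrow> c i \<in> f i"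
  shows "pairwise disjnt (f ` {..<d}) \<and> finite (f ` {..<d}) \<and> card (f ` {..<d}) = d"
proof (intro conjI)
  show "pairwise disjnt (f ` {..<d})" unfolding pairwise_def using dis by auto
  show "finite (f ` {..<d})" by simp
  have "inj_on f {..<d}"
  proof (rule inj_onI)
    fix i j assume "i \<in> {..<d}" "j \<in> {..<d}" "f i = f j"
    then show "i = j" using dis[of i j] ne[of i] by (auto simp: disjnt_def)
  qed
  then show "card (f ` {..<d}) = d" by (simp add: card_image)
qed

lemma nzi: fixes x :: "complex^4" shows "x$i \<noteq> 0 \<Longrightarrow> x \<noteq> 0" by auto
lemma famsub: "{L k i | k i. k < d \<and> i < d} \<subseteq> (\<Union>i<d. (\<lambda>k. L k i) ` {..<d})" by blast

lemma cancelx: "a * x = b * x \<Longrightarrow> a \<noteq> b \<Longrightarrow> (x::complex) = 0" by simp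

lemma vec0: fixes p :: "complex^4" assumes "p$1 = 0" "p$2 = 0" "p$3 = 0" "p$4 = 0" shows "p = 0"
  using assms by (simp add: vec_eq_iff forall_4)

lemma eta_ne:
  fixes \<eta> :: complex
  assumes e1: "\<eta> ^ d = 1" and prim: "\<forall>m. 0 < m \<and> m < d \<longrightarrow> \<eta> ^ m \<noteq> 1"
    and "i < d" "j < d" "i \<noteq> j"
  shows "\<eta>^i \<noteq> \<eta>^j"
proof -
  have "\<eta> \<noteq> 0" using e1 assms(3) by (auto simp: power_0_left)
  then show ?thesis using eta_inj[OF prim assms(3,4)] assms(5) by blast
qed

lemma fam_upper:
  fixes \<eta> v :: complex
  assumes s: "s \<in> {0,1,2::nat}" and A: "A \<subseteq> Lfam d \<eta> v s" and pw: "pairwise disjnt A"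
  shows "finite A \<and> card A \<le> d"
proof -
  consider "s = 0" | "s = 1" | "s = 2" using s by blast
  then show ?thesis
  proof cases
    case 1
    define c :: "nat \<Rightarrow> complex^4" where "c i = (\<chi> j. if j = 1 then 1 else if j = 2 then \<eta>^i else 0)" for i
    show ?thesis
    proof (rule count_bound[OF _ _ _ pw])
      show "A \<subseteq> (\<Union>i<d. (\<lambda>k. L0 \<eta> k i) ` {..<d})" using A 1 famsub[of "L0 \<eta>" d] by (simp add: Lfam_def)
      show "\<forall>i<d. finite ((\<lambda>k. L0 \<eta> k i) ` {..<d})" by simp
      show "\<forall>i<d. \<forall>X\<in>(\<lambda>k. L0 \<eta> k i) ` {..<d}. c i \<in> X"
      proof (intro allI impI ballI)
        fix i X assume "X \<in> (\<lambda>k. L0 \<eta> k i) ` {..<d}"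
        then obtain k where "X = L0 \<eta> k i" by blast
        moreover have "c i \<noteq> 0" unfolding c_def by (rule nzi[of _ 1]) simp
        ultimately show "c i \<in> X" by (simp add: L0_def c_def)
      qed
    qed
  next
    case 2
    define c :: "nat \<Rightarrow> complex^4" where "c i = (\<chi> j. if j = 2 then \<eta>^i else if j = 4 then 1 else 0)" for i
    show ?thesis
    proof (rule count_bound[OF _ _ _ pw])
      show "A \<subseteq> (\<Union>i<d. (\<lambda>k. L1 \<eta> k i) ` {..<d})" using A 2 famsub[of "L1 \<eta>" d] by (simp add: Lfam_def)
      show "\<forall>i<d. finite ((\<lambda>k. L1 \<eta> k i) ` {..<d})" by simp
      show "\<forall>i<d. \<forall>X\<in>(\<lambda>k. L1 \<eta> k i) ` {..<d}. c i \<in> X"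
      proof (intro allI impI ballI)
        fix i X assume "X \<in> (\<lambda>k. L1 \<eta> k i) ` {..<d}"
        then obtain k where "X = L1 \<eta> k i" by blast
        moreover have "c i \<noteq> 0" unfolding c_def by (rule nzi[of _ 4]) simp
        ultimately show "c i \<in> X" by (simp add: L1_def c_def)
      qed
    qed
  next
    case 3
    define c :: "nat \<Rightarrow> complex^4" where "c i = (\<chi> j. if j = 1 then v * \<eta>^i else if j = 4 then 1 else 0)" for i
    show ?thesis
    proof (rule count_bound[OF _ _ _ pw])
      show "A \<subseteq> (\<Union>i<d. (\<lambda>k. L2 \<eta> v k i) ` {..<d})" using A 3 famsub[of "L2 \<eta> v" d] by (simp add: Lfam_def)
      show "\<forall>i<d. finite ((\<lambda>k. L2 \<eta> v k i) ` {..<d})" by simp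
      show "\<forall>i<d. \<forall>X\<in>(\<lambda>k. L2 \<eta> v k i) ` {..<d}. c i \<in> X"
      proof (intro allI impI ballI)
        fix i X assume "X \<in> (\<lambda>k. L2 \<eta> v k i) ` {..<d}"
        then obtain k where "X = L2 \<eta> v k i" by blast
        moreover have "c i \<noteq> 0" unfolding c_def by (rule nzi[of _ 4]) simp
        ultimately show "c i \<in> X" by (simp add: L2_def c_def)
      qed
    qed
  qed
qed

lemma fam_lower:
  fixes \<eta> v :: complex
  assumes s: "s \<in> {0,1,2::nat}"
    and e1: "\<eta> ^ d = 1" and prim: "\<forall>m. 0 < m \<and> m < d \<longrightarrow> \<eta> ^ m \<noteq> 1"
    and v: "v ^ d = -1" and d: "d \<ge> 1"
  shows "\<exists>A0. A0 \<subseteq> Lfam d \<eta> v s \<and> pairwise disjnt A0 \<and> finite A0 \<and> card A0 = d"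
proof -
  have v0: "v \<noteq> 0" using v d by (auto simp: power_0_left)
  have d0: "0 < d" using d by simp
  consider "s = 0" | "s = 1" | "s = 2" using s by blast
  then show ?thesis
  proof cases
    case 1
    define c :: "nat \<Rightarrow> complex^4" where "c i = (\<chi> j. if j = 1 then 1 else if j = 2 then \<eta>^i else 0)" for i
    have "pairwise disjnt ((\<lambda>i. L0 \<eta> i i) ` {..<d}) \<and> finite ((\<lambda>i. L0 \<eta> i i) ` {..<d}) \<and> card ((\<lambda>i. L0 \<eta> i i) ` {..<d}) = d"
    proof (rule lower_bound[where c=c])
      fix i assume "i < d"
      have "c i \<noteq> 0" unfolding c_def by (rule nzi[of _ 1]) simp
      then show "c i \<in> L0 \<eta> i i" by (simp add: L0_def c_def)
    next
      fix i j assume ij: "i < d" "j < d" "i \<noteq> j"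
      have ne: "\<eta>^i \<noteq> \<eta>^j" by (rule eta_ne[OF e1 prim ij])
      show "disjnt (L0 \<eta> i i) (L0 \<eta> j j)" unfolding disjnt_def
      proof (rule ccontr)
        assume "L0 \<eta> i i \<inter> L0 \<eta> j j \<noteq> {}"
        then obtain p where "p \<in> L0 \<eta> i i" "p \<in> L0 \<eta> j j" by blast
        then obtain p :: "complex^4" where p: "p \<noteq> 0" "p$2 = \<eta>^i * p$1" "p$4 = \<eta>^i * p$3" "p$2 = \<eta>^j * p$1" "p$4 = \<eta>^j * p$3"
          unfolding L0_def by auto
        have "\<eta>^i * p$1 = \<eta>^j * p$1" "\<eta>^i * p$3 = \<eta>^j * p$3"
          by (simp_all only: p(2)[symmetric] p(4)[symmetric] p(3)[symmetric] p(5)[symmetric])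
        then have z: "p$1 = 0" "p$3 = 0" using cancelx ne by blast+
        have "p = 0" by (rule vec0) (simp_all only: z p(2) p(3) mult_zero_right)
        then show False using p by simp
      qed
    qed
    moreover have "(\<lambda>i. L0 \<eta> i i) ` {..<d} \<subseteq> Lfam d \<eta> v s" using 1 unfolding Lfam_def by (simp add: image_subset_iff) blast
    ultimately show ?thesis by blast
  next
    case 2
    define c :: "nat \<Rightarrow> complex^4" where "c i = (\<chi> j. if j = 2 then \<eta>^i else if j = 4 then 1 else 0)" for i
    have "pairwise disjnt ((\<lambda>i. L1 \<eta> 0 i) ` {..<d}) \<and> finite ((\<lambda>i. L1 \<eta> 0 i) ` {..<d}) \<and> card ((\<lambda>i. L1 \<eta> 0 i) ` {..<d}) = d"
    proof (rule lower_bound[where c=c])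
      fix i assume "i < d"
      have "c i \<noteq> 0" unfolding c_def by (rule nzi[of _ 4]) simp
      then show "c i \<in> L1 \<eta> 0 i" by (simp add: L1_def c_def)
    next
      fix i j assume ij: "i < d" "j < d" "i \<noteq> j"
      have ne: "\<eta>^i \<noteq> \<eta>^j" by (rule eta_ne[OF e1 prim ij])
      show "disjnt (L1 \<eta> 0 i) (L1 \<eta> 0 j)" unfolding disjnt_def
      proof (rule ccontr)
        assume "L1 \<eta> 0 i \<inter> L1 \<eta> 0 j \<noteq> {}"
        then obtain p where "p \<in> L1 \<eta> 0 i" "p \<in> L1 \<eta> 0 j" by blast
        then obtain p :: "complex^4" where p: "p \<noteq> 0" "p$1 = \<eta>^i * p$3" "p$2 = \<eta>^i * p$4" "p$1 = \<eta>^j * p$3" "p$2 = \<eta>^j * p$4"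
          unfolding L1_def by auto
        have "\<eta>^i * p$3 = \<eta>^j * p$3" "\<eta>^i * p$4 = \<eta>^j * p$4"
          by (simp_all only: p(2)[symmetric] p(4)[symmetric] p(3)[symmetric] p(5)[symmetric])
        then have z: "p$3 = 0" "p$4 = 0" using cancelx ne by blast+
        have "p = 0" by (rule vec0) (simp_all only: z p(2) p(3) mult_zero_right)
        then show False using p by simp
      qed
    qed
    moreover have "(\<lambda>i. L1 \<eta> 0 i) ` {..<d} \<subseteq> Lfam d \<eta> v s" using 2 d0 unfolding Lfam_def by (simp add: image_subset_iff) blast
    ultimately show ?thesis by blast
  next
    case 3
    define c :: "nat \<Rightarrow> complex^4" where "c i = (\<chi> j. if j = 1 then v * \<eta>^i else if j = 4 then 1 else 0)" for i
    have "pairwise disjnt ((\<lambda>i. L2 \<eta> v 0 i) ` {..<d}) \<and> finite ((\<lambda>i. L2 \<eta> v 0 i) ` {..<d}) \<and> card ((\<lambda>i. L2 \<eta> v 0 i) ` {..<d}) = d"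
    proof (rule lower_bound[where c=c])
      fix i assume "i < d"
      have "c i \<noteq> 0" unfolding c_def by (rule nzi[of _ 4]) simp
      then show "c i \<in> L2 \<eta> v 0 i" by (simp add: L2_def c_def)
    next
      fix i j assume ij: "i < d" "j < d" "i \<noteq> j"
      have ne: "\<eta>^i \<noteq> \<eta>^j" by (rule eta_ne[OF e1 prim ij])
      show "disjnt (L2 \<eta> v 0 i) (L2 \<eta> v 0 j)" unfolding disjnt_def
      proof (rule ccontr)
        assume "L2 \<eta> v 0 i \<inter> L2 \<eta> v 0 j \<noteq> {}"
        then obtain p where "p \<in> L2 \<eta> v 0 i" "p \<in> L2 \<eta> v 0 j" by blast
        then obtain p :: "complex^4" where p: "p \<noteq> 0" "p$1 = v * \<eta>^i * p$4" "p$2 = v * \<eta>^i * p$3" "p$1 = v * \<eta>^j * p$4" "p$2 = v * \<eta>^j * p$3"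
          unfolding L2_def by auto
        have "(v * \<eta>^i) * p$3 = (v * \<eta>^j) * p$3" "(v * \<eta>^i) * p$4 = (v * \<eta>^j) * p$4"
          by (simp_all only: p(2)[symmetric] p(4)[symmetric] p(3)[symmetric] p(5)[symmetric])
        moreover have "v * \<eta>^i \<noteq> v * \<eta>^j" using ne v0 by simp
        ultimately have z: "p$3 = 0" "p$4 = 0" using cancelx by blast+
        have "p = 0" by (rule vec0) (simp_all only: z p(2) p(3) mult_zero_right)
        then show False using p by simp
      qed
    qed
    moreover have "(\<lambda>i. L2 \<eta> v 0 i) ` {..<d} \<subseteq> Lfam d \<eta> v s" using 3 d0 unfolding Lfam_def by (simp add: image_subset_iff) blast
    ultimately show ?thesis by blast
  qed
qed

theorem corollary2p1:
  fixes d :: nat and \<eta> v :: complex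
  assumes "d \<ge> 3"
    and "\<eta> ^ d = 1" and "\<forall>m. 0 < m \<and> m < d \<longrightarrow> \<eta> ^ m \<noteq> 1"
    and "v ^ d = -1"
  shows "(\<forall>s \<in> {0, 1, 2}. sfrak (Lfam d \<eta> v s) = enat d)
         \<and> sfrak (lines_on (Fermat d)) \<le> enat (3 * d)"
proof
  have d1: "d \<ge> 1" using assms(1) by simp
  show "\<forall>s \<in> {0, 1, 2}. sfrak (Lfam d \<eta> v s) = enat d"
  proof
    fix s :: nat assume s: "s \<in> {0,1,2}"
    obtain A0 where "A0 \<subseteq> Lfam d \<eta> v s" "pairwise disjnt A0" "finite A0" "card A0 = d"
      using fam_lower[OF s assms(2,3,4) d1] by blast
    moreover have "\<forall>A. A \<subseteq> Lfam d \<eta> v s \<and> pairwise disjnt A \<longrightarrow> finite A \<and> card A \<le> d"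
      using fam_upper[OF s] by blast
    ultimately show "sfrak (Lfam d \<eta> v s) = enat d" using sfrak_eq by blast
  qed
  show "sfrak (lines_on (Fermat d)) \<le> enat (3 * d)"
  proof (rule sfrak_le, intro allI impI)
    fix A assume A: "A \<subseteq> lines_on (Fermat d) \<and> pairwise disjnt A"
    have pw: "pairwise disjnt A" using A by blast
    define X0 where "X0 = A \<inter> Lfam d \<eta> v 0"
    define X1 where "X1 = A \<inter> Lfam d \<eta> v 1"
    define X2 where "X2 = A \<inter> Lfam d \<eta> v 2"
    have sub: "L \<in> Lfam d \<eta> v 0 \<union> Lfam d \<eta> v 1 \<union> Lfam d \<eta> v 2" if "L \<in> A" for L
    proof -
      have "L \<in> lines_on (Fermat d)" using A that by blast
      then show ?thesis by (rule line_in_fam[OF assms])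
    qed
    have eq: "A = X0 \<union> X1 \<union> X2" unfolding X0_def X1_def X2_def using sub by blast
    have B: "finite (A \<inter> Lfam d \<eta> v s) \<and> card (A \<inter> Lfam d \<eta> v s) \<le> d" if "s \<in> {0,1,2}" for s
    proof -
      have "pairwise disjnt (A \<inter> Lfam d \<eta> v s)" by (rule pairwise_subset[OF pw]) blast
      then show ?thesis by (rule fam_upper[OF that Int_lower2])
    qed
    have B0: "finite X0" "card X0 \<le> d" using B[of 0] unfolding X0_def by auto
    have B1: "finite X1" "card X1 \<le> d" using B[of 1] unfolding X1_def by auto
    have B2: "finite X2" "card X2 \<le> d" using B[of 2] unfolding X2_def by auto
    have fA: "finite A" unfolding eq using B0 B1 B2 by simp
    have c1: "card (X0 \<union> X1 \<union> X2) \<le> card (X0 \<union> X1) + card X2" by (rule card_Un_le)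
    have c2: "card (X0 \<union> X1) \<le> card X0 + card X1" by (rule card_Un_le)
    have "card A \<le> 3 * d" unfolding eq using c1 c2 B0 B1 B2 by linarith
    then show "finite A \<and> card A \<le> 3 * d" using fA by simp
  qed
qed

end
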